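(* Let $r=r(n)\ge3$ and $m=m(n)$ be integers with $r=o(n^{1/2})$ and $\log(r^{-2}n)\le m=O(r^{-2}n)$. Then, as $n\to\infty$, \[ \frac{|\mathcal{H}^+_r(n,m)|}{|\mathcal{H}_r(n,m)|}=1-O\Bigl(\frac{r^6m^2}{n^3}\Bigr),\qquad \frac{|\mathcal{H}^{++}_r(n,m)|}{|\mathcal{H}_r(n,m)|}=1-O\Bigl(\frac{r^6m^2}{n^3}\Bigr). \]
   Context: $\mathcal{H}_r(n,m)$ is the set of $r$-uniform hypergraphs on $[n]$ with exactly $m$ edges. For such $H$, two edges are linked if they share exactly two vertices. Let $G_H$ be the graph whose vertices are the edges of $H$, two adjacent iff linked; a cluster of $H$ is the sub-hypergraph formed by the edges of a connected component of $G_H$ with at least two vertices. Set $M_0^*=\lceil\log(r^{-2}n)\rceil$, $M_0=M_0^*+2$, $M_4=\lceil\log(r^{-2}n)\rceil$ ($\log$ natural). $\mathcal{H}^+_r(n,m)$ is the set of $H\in\mathcal{H}_r(n,m)$ such that: (a) any two edges share at most two vertices; (b) every cluster consists of exactly two edges; (c) any two distinct clusters are vertex-disjoint; (d) there are at most $M_4$ clusters; (e) every vertex has degree at most $M_0$. $\mathcal{H}^{++}_r(n,m)$ is the subset of $\mathcal{H}^+_r(n,m)$ in which every vertex has degree at most $M_0^*$. *)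

theory Defs
  imports Complex_Main "HOL-Library.Landau_Symbols"
begin

definition hypergraphs :: "nat \<Rightarrow> nat \<Rightarrow> nat \<Rightarrow> nat set set set" where
  "hypergraphs r n m =
     {H. H \<subseteq> {e. e \<subseteq> {1..n} \<and> card e = r} \<and> card H = m}"

definition linked :: "nat set \<Rightarrow> nat set \<Rightarrow> bool" where
  "linked e f \<longleftrightarrow> e \<noteq> f \<and> card (e \<inter> f) = 2"

definition link_rel :: "nat set set \<Rightarrow> (nat set \<times> nat set) set" where
  "link_rel H = {(e, f). e \<in> H \<and> f \<in> H \<and> linked e f}"

definition component :: "nat set set \<Rightarrow> nat set \<Rightarrow> nat set set" where
  "component H e = {f \<in> H. (e, f) \<in> (link_rel H)\<^sup>*}"

definition clusters :: "nat set set \<Rightarrow> nat set set set" where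
  "clusters H = {C. \<exists>e\<in>H. C = component H e \<and> card C \<ge> 2}"

definition degree :: "nat set set \<Rightarrow> nat \<Rightarrow> nat" where
  "degree H v = card {e \<in> H. v \<in> e}"

definition M0star :: "nat \<Rightarrow> nat \<Rightarrow> int" where
  "M0star r n = \<lceil>ln (real n / (real r)\<^sup>2)\<rceil>"

definition M0 :: "nat \<Rightarrow> nat \<Rightarrow> int" where
  "M0 r n = M0star r n + 2"

definition M4 :: "nat \<Rightarrow> nat \<Rightarrow> int" where
  "M4 r n = \<lceil>ln (real n / (real r)\<^sup>2)\<rceil>"

definition hypergraphs_plus :: "nat \<Rightarrow> nat \<Rightarrow> nat \<Rightarrow> nat set set set" where
  "hypergraphs_plus r n m =
     {H \<in> hypergraphs r n m.
        (\<forall>e\<in>H. \<forall>f\<in>H. e \<noteq> f \<longrightarrow> card (e \<inter> f) \<le> 2) \<and>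
        (\<forall>C\<in>clusters H. card C = 2) \<and>
        (\<forall>C1\<in>clusters H. \<forall>C2\<in>clusters H. C1 \<noteq> C2 \<longrightarrow> \<Union>C1 \<inter> \<Union>C2 = {}) \<and>
        int (card (clusters H)) \<le> M4 r n \<and>
        (\<forall>v\<in>{1..n}. int (degree H v) \<le> M0 r n)}"

definition hypergraphs_pplus :: "nat \<Rightarrow> nat \<Rightarrow> nat \<Rightarrow> nat set set set" where
  "hypergraphs_pplus r n m =
     {H \<in> hypergraphs_plus r n m. \<forall>v\<in>{1..n}. int (degree H v) \<le> M0star r n}"

end

theory Submission
  imports Defs
begin


lemma choose_ratio:
  assumes "k \<le> Nn"
  shows "real (k choose t) * real Nn ^ t \<le> real (Nn choose t) * real k ^ t"
proof (cases "t \<le> k")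
  case False
  then show ?thesis by (simp add: binomial_eq_0)
next
  case True
  have tN: "t \<le> Nn" using True assms by simp
  have l: "real (k choose t) * real Nn ^ t = (\<Prod>i = 0..<t. real (k - i) / real (t - i) * real Nn)"
    using True by (simp only: binomial_altdef_of_nat prod.distrib prod_constant card_atLeastLessThan diff_zero)
  have r: "real (Nn choose t) * real k ^ t = (\<Prod>i = 0..<t. real (Nn - i) / real (t - i) * real k)"
    using tN by (simp only: binomial_altdef_of_nat prod.distrib prod_constant card_atLeastLessThan diff_zero)
  have "(\<Prod>i = 0..<t. real (k - i) / real (t - i) * real Nn) \<le> (\<Prod>i = 0..<t. real (Nn - i) / real (t - i) * real k)"
  proof (rule prod_mono)
    fix i assume i: "i \<in> {0..<t}"
    hence it: "i < t" by simp
    have "real (k - i) * real Nn \<le> real (Nn - i) * real k"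
    proof -
      have "real i * real k \<le> real i * real Nn" using assms by (simp add: mult_left_mono)
      then show ?thesis using it True assms by (simp add: of_nat_diff algebra_simps)
    qed
    moreover have "real (t - i) > 0" using it by simp
    ultimately show "0 \<le> real (k - i) / real (t - i) * real Nn \<and>
      real (k - i) / real (t - i) * real Nn \<le> real (Nn - i) / real (t - i) * real k"
      by (simp add: divide_right_mono mult.commute mult.left_commute divide_simps)
  qed
  then show ?thesis using l r by simp
qed

lemma card_supersets:
  assumes U: "finite U" and T: "T \<subseteq> U"
  shows "real (card {A. A \<subseteq> U \<and> card A = k \<and> T \<subseteq> A}) \<le>
           real (card U choose k) * (real k / real (card U)) ^ card T"
proof -
  let ?S = "{A. A \<subseteq> U \<and> card A = k \<and> T \<subseteq> A}"
  let ?t = "card T" and ?N = "card U"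
  have fT: "finite T" using U T finite_subset by blast
  show ?thesis
  proof (cases "?t \<le> k \<and> k \<le> ?N")
    case False
    have "?S = {}"
    proof (rule ccontr)
      assume "?S \<noteq> {}"
      then obtain A where A: "A \<subseteq> U" "card A = k" "T \<subseteq> A" by blast
      have "?t \<le> k" using A fT U by (metis card_mono finite_subset)
      moreover have "k \<le> ?N" using A U card_mono by blast
      ultimately show False using False by simp
    qed
    moreover have "0 \<le> real (card U choose k) * (real k / real (card U)) ^ card T" by simp
    ultimately show ?thesis by (metis card.empty of_nat_0)
  next
    case True
    have bij: "bij_betw (\<lambda>A. A - T) ?S {B. B \<subseteq> U - T \<and> card B = k - ?t}"
    proof (rule bij_betw_byWitness[where f'="\<lambda>B. B \<union> T"])
      show "\<forall>a\<in>?S. (a - T) \<union> T = a" by auto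
      show "\<forall>a\<in>{B. B \<subseteq> U - T \<and> card B = k - ?t}. a \<union> T - T = a" by auto
      show "(\<lambda>A. A - T) ` ?S \<subseteq> {B. B \<subseteq> U - T \<and> card B = k - ?t}"
      proof
        fix B assume "B \<in> (\<lambda>A. A - T) ` ?S"
        then obtain A where A: "A \<subseteq> U" "card A = k" "T \<subseteq> A" "B = A - T" by blast
        have "finite A" using A U finite_subset by blast
        then have "card B = k - ?t" using A by (simp add: card_Diff_subset fT)
        then show "B \<in> {B. B \<subseteq> U - T \<and> card B = k - ?t}" using A by auto
      qed
      show "(\<lambda>B. B \<union> T) ` {B. B \<subseteq> U - T \<and> card B = k - ?t} \<subseteq> ?S"
      proof
        fix A assume "A \<in> (\<lambda>B. B \<union> T) ` {B. B \<subseteq> U - T \<and> card B = k - ?t}"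
        then obtain B where B: "B \<subseteq> U - T" "card B = k - ?t" "A = B \<union> T" by blast
        have "finite B" using B U finite_subset by blast
        then have "card A = k" using B True fT by (subst B(3), subst card_Un_disjoint) auto
        then show "A \<in> ?S" using B T by auto
      qed
    qed
    have "card ?S = card (U - T) choose (k - ?t)"
      using bij_betw_same_card[OF bij] n_subsets[of "U - T" "k - ?t"] U by simp
    also have "\<dots> = (?N - ?t) choose (k - ?t)" using T fT by (simp add: card_Diff_subset)
    finally have cS: "card ?S = (?N - ?t) choose (k - ?t)" .
    have cm: "(?N choose k) * (k choose ?t) = (?N choose ?t) * ((?N - ?t) choose (k - ?t))"
      using True choose_mult by blast
    have pos: "real (?N choose ?t) > 0" using True by simp
    have "real (card ?S) * real (?N choose ?t) = real (?N choose k) * real (k choose ?t)"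
      using cS cm by (metis mult.commute of_nat_mult)
    have "real (card ?S) * real (?N choose ?t) * real ?N ^ ?t
           = real (?N choose k) * (real (k choose ?t) * real ?N ^ ?t)"
      using \<open>real (card ?S) * real (?N choose ?t) = _\<close> by simp
    also have "\<dots> \<le> real (?N choose k) * (real (?N choose ?t) * real k ^ ?t)"
      by (rule mult_left_mono[OF choose_ratio]) (use True in auto)
    finally have fin: "real (card ?S) * real ?N ^ ?t \<le> real (?N choose k) * real k ^ ?t"
      using pos by (simp add: mult.commute mult.left_commute mult_le_cancel_left_pos)
    show ?thesis
    proof (cases "?N = 0")
      case True
      then have "?t = 0" "k = 0" using \<open>?t \<le> k \<and> k \<le> ?N\<close> by auto
      then show ?thesis using fin by simp
    next
      case False
      then have Npos: "real ?N > 0" by simp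
      show ?thesis using fin Npos by (simp add: power_divide divide_simps)
    qed
  qed
qed

lemma card_many_inter:
  assumes U: "finite U" and e: "finite e"
  shows "real (card {f. f \<subseteq> U \<and> card f = k \<and> t \<le> card (e \<inter> f)}) \<le>
           real (card e choose t) * real (card U choose k) * (real k / real (card U)) ^ t"
proof -
  let ?I = "{T. T \<subseteq> e \<and> card T = t}"
  let ?A = "\<lambda>T. {A. A \<subseteq> U \<and> card A = k \<and> T \<subseteq> A}"
  have sub: "{f. f \<subseteq> U \<and> card f = k \<and> t \<le> card (e \<inter> f)} \<subseteq> (\<Union>T\<in>?I. ?A T)"
  proof
    fix f assume f: "f \<in> {f. f \<subseteq> U \<and> card f = k \<and> t \<le> card (e \<inter> f)}"
    have "t \<le> card (e \<inter> f)" using f by simp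
    then obtain T where T: "T \<subseteq> e \<inter> f" "card T = t"
      by (meson obtain_subset_with_card_n)
    then show "f \<in> (\<Union>T\<in>?I. ?A T)" using f by blast
  qed
  have fI: "finite ?I" by (rule finite_subset[where B="Pow e"]) (blast, simp add: e)
  have fA: "\<And>T. finite (?A T)" by (rule finite_subset[where B="Pow U"]) (blast, simp add: U)
  have "card {f. f \<subseteq> U \<and> card f = k \<and> t \<le> card (e \<inter> f)} \<le> card (\<Union>T\<in>?I. ?A T)"
    by (rule card_mono[OF finite_UN_I[OF fI fA] sub])
  also have "\<dots> \<le> (\<Sum>T\<in>?I. card (?A T))" by (rule card_UN_le[OF fI])
  finally have "real (card {f. f \<subseteq> U \<and> card f = k \<and> t \<le> card (e \<inter> f)}) \<le> (\<Sum>T\<in>?I. real (card (?A T)))"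
    unfolding of_nat_sum[symmetric] of_nat_le_iff .
  also have "\<dots> \<le> (\<Sum>T\<in>?I. real (card U choose k) * (real k / real (card U)) ^ t)"
  proof (rule sum_mono)
    fix T assume T: "T \<in> ?I"
    show "real (card (?A T)) \<le> real (card U choose k) * (real k / real (card U)) ^ t"
    proof (cases "T \<subseteq> U")
      case True
      have "card T = t" using T by simp
      then show ?thesis using card_supersets[OF U True, of k] by (simp only:)
    next
      case False
      then have "?A T = {}" by blast
      moreover have "0 \<le> real (card U choose k) * (real k / real (card U)) ^ t" by simp
      ultimately show ?thesis by (metis card.empty of_nat_0)
    qed
  qed
  also have "\<dots> = real (card e choose t) * real (card U choose k) * (real k / real (card U)) ^ t"
    by (simp only: sum_constant n_subsets[OF e, of t] mult.assoc)
  finally show ?thesis .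
qed

definition edges :: "nat \<Rightarrow> nat \<Rightarrow> nat set set" where
  "edges r n = {e. e \<subseteq> {1..n} \<and> card e = r}"

lemma hyp_alt: "hypergraphs r n m = {H. H \<subseteq> edges r n \<and> card H = m}"
  unfolding hypergraphs_def edges_def by simp

lemma finite_edges[simp]: "finite (edges r n)"
  unfolding edges_def by (rule finite_subset[where B="Pow {1..n}"]) (blast, simp)

lemma card_edges: "card (edges r n) = n choose r"
  unfolding edges_def using n_subsets[of "{1..n}" r] by simp

lemma card_hyp: "card (hypergraphs r n m) = (n choose r) choose m"
  unfolding hyp_alt using n_subsets[of "edges r n" m] by (simp add: card_edges)

lemma finite_hyp[simp]: "finite (hypergraphs r n m)"
  unfolding hyp_alt by (rule finite_subset[where B="Pow (edges r n)"]) (blast, simp)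

definition nbr :: "nat \<Rightarrow> nat \<Rightarrow> nat set \<Rightarrow> nat \<Rightarrow> nat set set" where
  "nbr r n e t = {f \<in> edges r n. t \<le> card (e \<inter> f)}"

lemma finite_nbr[simp]: "finite (nbr r n e t)"
  unfolding nbr_def by simp

lemma card_nbr:
  assumes "finite e"
  shows "real (card (nbr r n e t)) \<le> real (card e choose t) * real (n choose r) * (real r / real n) ^ t"
proof -
  have "nbr r n e t = {f. f \<subseteq> {1..n} \<and> card f = r \<and> t \<le> card (e \<inter> f)}"
    unfolding nbr_def edges_def by auto
  then show ?thesis using card_many_inter[of "{1..n}" e r t] assms by simp
qed

lemma union_bound:
  assumes B: "Bad \<subseteq> {H \<in> hypergraphs r n m. \<exists>S\<in>F. S \<subseteq> H}"
    and F: "\<forall>S\<in>F. S \<subseteq> edges r n \<and> card S = k" "finite F"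
  shows "real (card Bad) \<le> real (card F) * real (card (hypergraphs r n m)) * (real m / real (n choose r)) ^ k"
proof -
  let ?A = "\<lambda>S. {H. H \<subseteq> edges r n \<and> card H = m \<and> S \<subseteq> H}"
  have sub: "Bad \<subseteq> (\<Union>S\<in>F. ?A S)" using B unfolding hyp_alt by auto
  have fA: "\<And>S. finite (?A S)" by (rule finite_subset[where B="Pow (edges r n)"]) (blast, simp)
  have "card Bad \<le> card (\<Union>S\<in>F. ?A S)"
    by (rule card_mono[OF finite_UN_I[OF F(2) fA] sub])
  also have "\<dots> \<le> (\<Sum>S\<in>F. card (?A S))" by (rule card_UN_le[OF F(2)])
  finally have "real (card Bad) \<le> (\<Sum>S\<in>F. real (card (?A S)))"
    unfolding of_nat_sum[symmetric] of_nat_le_iff .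
  also have "\<dots> \<le> (\<Sum>S\<in>F. real (card (hypergraphs r n m)) * (real m / real (n choose r)) ^ k)"
  proof (rule sum_mono)
    fix S assume S: "S \<in> F"
    show "real (card (?A S)) \<le> real (card (hypergraphs r n m)) * (real m / real (n choose r)) ^ k"
      using card_supersets[of "edges r n" S m] S F by (simp add: card_edges card_hyp)
  qed
  also have "\<dots> = real (card F) * real (card (hypergraphs r n m)) * (real m / real (n choose r)) ^ k"
    by simp
  finally show ?thesis .
qed

lemma card_Sigma_le:
  assumes "finite A" "\<forall>a\<in>A. finite (B a) \<and> real (card (B a)) \<le> b"
  shows "real (card (Sigma A B)) \<le> real (card A) * b"
proof -
  have "real (card (Sigma A B)) = (\<Sum>a\<in>A. real (card (B a)))"
    using assms card_SigmaI[of A B] by (simp add: of_nat_sum)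
  also have "\<dots> \<le> (\<Sum>a\<in>A. b)" by (rule sum_mono) (use assms in auto)
  finally show ?thesis by simp
qed



lemma choose_le_pow_real: "real (a choose t) \<le> real a ^ t"
proof -
  have "(a choose t) * fact t \<le> a ^ t" by (rule binomial_fact_pow)
  moreover have "(a choose t) \<le> (a choose t) * fact t" by simp
  ultimately have "a choose t \<le> a ^ t" by linarith
  then show ?thesis by (metis of_nat_le_iff of_nat_power)
qed

lemma choose_le_pow_fact: "real (a choose t) \<le> real a ^ t / fact t"
proof -
  have "(a choose t) * fact t \<le> a ^ t" by (rule binomial_fact_pow)
  then have "real (a choose t) * fact t \<le> real a ^ t" by (metis of_nat_fact of_nat_le_iff of_nat_mult of_nat_power)
  then show ?thesis by (simp add: field_simps)
qed

lemma card_nbr_edge: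
  assumes "e \<in> edges r n"
  shows "real (card (nbr r n e t)) \<le> real r ^ t * real (n choose r) * (real r / real n) ^ t"
proof -
  have "finite e" "card e = r" using assms unfolding edges_def by (auto intro: finite_subset)
  then show ?thesis using card_nbr[of e r n t] choose_le_pow_real[of r t]
    by (smt (verit) mult_right_mono zero_le_power divide_nonneg_nonneg of_nat_0_le_iff mult_nonneg_nonneg)
qed

lemma card_nbr_1:
  assumes "finite e" "card e \<le> c"
  shows "real (card (nbr r n e 1)) \<le> real c * real (n choose r) * (real r / real n)"
proof -
  have "real (card e choose 1) \<le> real c" using assms by simp
  then show ?thesis using card_nbr[of e r n 1] assms
    by (smt (verit) mult_right_mono zero_le_power divide_nonneg_nonneg of_nat_0_le_iff mult_nonneg_nonneg power_one_right)
qed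

lemma ub_alg:
  fixes N H cF c m :: real
  assumes "0 < N" "0 \<le> H" "0 \<le> m" "cF \<le> N ^ k * c"
  shows "cF * H * (m / N) ^ k \<le> H * (c * m ^ k)"
proof -
  have "cF * H * (m / N) ^ k \<le> (N ^ k * c) * H * (m / N) ^ k"
    using assms by (intro mult_right_mono) auto
  also have "\<dots> = H * (c * m ^ k)" using assms by (simp add: power_divide field_simps)
  finally show ?thesis .
qed

lemma linked_nbr: "f \<in> edges r n \<Longrightarrow> linked e f \<Longrightarrow> f \<in> nbr r n e 2"
  unfolding nbr_def linked_def by simp

lemma linked_sym: "linked e f \<Longrightarrow> linked f e"
  unfolding linked_def by (auto simp add: Int_commute)

lemma edges_finite_card: "e \<in> edges r n \<Longrightarrow> finite e \<and> card e = r"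
  unfolding edges_def by (auto intro: finite_subset)

definition bad_a :: "nat \<Rightarrow> nat \<Rightarrow> nat \<Rightarrow> nat set set set" where
  "bad_a r n m = {H \<in> hypergraphs r n m. \<exists>e\<in>H. \<exists>f\<in>H. e \<noteq> f \<and> 3 \<le> card (e \<inter> f)}"


lemma bound_a:
  assumes "0 < r" "r \<le> n"
  shows "real (card (bad_a r n m)) \<le> real (card (hypergraphs r n m)) * (real r ^ 6 * real m ^ 2 / real n ^ 3)"
proof -
  let ?E = "edges r n" let ?N = "real (n choose r)" let ?x = "real r / real n"
  let ?T = "Sigma ?E (\<lambda>e. nbr r n e 3 - {e})"
  let ?F = "(\<lambda>(e,f). {e,f}) ` ?T"
  have Npos: "?N > 0" using assms by simp
  have fT: "finite ?T" by simp
  have B: "bad_a r n m \<subseteq> {H \<in> hypergraphs r n m. \<exists>S\<in>?F. S \<subseteq> H}"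
  proof
    fix H assume H: "H \<in> bad_a r n m"
    then obtain e f where ef: "e \<in> H" "f \<in> H" "e \<noteq> f" "3 \<le> card (e \<inter> f)" unfolding bad_a_def by blast
    have HE: "H \<subseteq> ?E" using H unfolding bad_a_def hyp_alt by blast
    have "e \<in> ?E" "f \<in> ?E" using ef HE by auto
    then have "f \<in> nbr r n e 3 - {e}" using ef unfolding nbr_def by simp
    then have "(e,f) \<in> ?T" using \<open>e \<in> ?E\<close> by (rule SigmaI[rotated])
    then have inF: "{e,f} \<in> ?F" by (rule rev_image_eqI) simp
    have sH: "{e,f} \<subseteq> H" using ef by simp
    have HH: "H \<in> hypergraphs r n m" using H unfolding bad_a_def by simp
    show "H \<in> {H \<in> hypergraphs r n m. \<exists>S\<in>?F. S \<subseteq> H}"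
      unfolding mem_Collect_eq using HH sH inF by (intro conjI bexI[where x="{e,f}"])
  qed
  have F: "\<forall>S\<in>?F. S \<subseteq> ?E \<and> card S = 2"
  proof
    fix S assume "S \<in> ?F"
    then obtain p where p: "p \<in> ?T" "S = (case p of (e,f) \<Rightarrow> {e,f})" by (rule imageE)
    obtain e f where pe: "p = (e,f)" by (cases p)
    have "e \<in> ?E" "f \<in> nbr r n e 3" "f \<noteq> e" using p(1) pe by auto
    then have "e \<in> ?E" "f \<in> ?E" "f \<noteq> e" unfolding nbr_def by auto
    then show "S \<subseteq> ?E \<and> card S = 2" using p(2) pe by simp
  qed
  have "real (card (bad_a r n m)) \<le> real (card ?F) * real (card (hypergraphs r n m)) * (real m / ?N) ^ 2"
    by (rule union_bound[OF B F]) simp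
  moreover have "real (card ?F) \<le> ?N ^ 2 * (real r ^ 3 * ?x ^ 3)"
  proof -
    have "card ?F \<le> card ?T" by (rule card_image_le[OF fT])
    then have "real (card ?F) \<le> real (card ?T)" by (simp only: of_nat_le_iff)
    also have "\<dots> \<le> real (card ?E) * (real r ^ 3 * ?N * ?x ^ 3)"
    proof (rule card_Sigma_le)
      show "\<forall>a\<in>?E. finite (nbr r n a 3 - {a}) \<and> real (card (nbr r n a 3 - {a})) \<le> real r ^ 3 * ?N * ?x ^ 3"
      proof
        fix a assume a: "a \<in> ?E"
        have "card (nbr r n a 3 - {a}) \<le> card (nbr r n a 3)" by (rule card_mono[OF finite_nbr]) blast
        show "finite (nbr r n a 3 - {a}) \<and> real (card (nbr r n a 3 - {a})) \<le> real r ^ 3 * ?N * ?x ^ 3"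
        proof
          show "finite (nbr r n a 3 - {a})" by (rule finite_Diff[OF finite_nbr])
          have "real (card (nbr r n a 3 - {a})) \<le> real (card (nbr r n a 3))"
            using \<open>card (nbr r n a 3 - {a}) \<le> card (nbr r n a 3)\<close> by (simp only: of_nat_le_iff)
          then show "real (card (nbr r n a 3 - {a})) \<le> real r ^ 3 * ?N * ?x ^ 3"
            using card_nbr_edge[OF a, of 3] by linarith
        qed
      qed
    qed (rule finite_edges)
    also have "\<dots> = ?N ^ 2 * (real r ^ 3 * ?x ^ 3)" by (simp add: card_edges power2_eq_square)
    finally show ?thesis .
  qed
  ultimately have "real (card (bad_a r n m)) \<le> real (card (hypergraphs r n m)) * ((real r ^ 3 * ?x ^ 3) * real m ^ 2)"
    using ub_alg[OF Npos, of "real (card (hypergraphs r n m))" "real m" "real (card ?F)" 2 "real r ^ 3 * ?x ^ 3"]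
    by (meson of_nat_0_le_iff order_trans)
  also have "\<dots> = real (card (hypergraphs r n m)) * (real r ^ 6 * real m ^ 2 / real n ^ 3)"
    by (simp add: power_divide field_simps)
  finally show ?thesis .
qed

lemma nbr_edges: "f \<in> nbr r n e t \<Longrightarrow> f \<in> edges r n"
  unfolding nbr_def by simp

lemma card_nbr_minus:
  assumes "e \<in> edges r n"
  shows "finite (nbr r n e t - X) \<and> real (card (nbr r n e t - X)) \<le> real r ^ t * real (n choose r) * (real r / real n) ^ t"
proof
  show "finite (nbr r n e t - X)" by (rule finite_Diff[OF finite_nbr])
  have "card (nbr r n e t - X) \<le> card (nbr r n e t)" by (rule card_mono[OF finite_nbr]) blast
  then have "real (card (nbr r n e t - X)) \<le> real (card (nbr r n e t))" by (simp only: of_nat_le_iff)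
  then show "real (card (nbr r n e t - X)) \<le> real r ^ t * real (n choose r) * (real r / real n) ^ t"
    using card_nbr_edge[OF assms, of t] by linarith
qed

lemma ub_final:
  assumes B: "Bad \<subseteq> {H \<in> hypergraphs r n m. \<exists>S\<in>F. S \<subseteq> H}"
    and F: "\<forall>S\<in>F. S \<subseteq> edges r n \<and> card S = k" "finite F"
    and cF: "real (card F) \<le> real (n choose r) ^ k * c"
    and rn: "0 < r" "r \<le> n"
  shows "real (card Bad) \<le> real (card (hypergraphs r n m)) * (c * real m ^ k)"
proof -
  have Npos: "real (n choose r) > 0" using rn by simp
  have "real (card Bad) \<le> real (card F) * real (card (hypergraphs r n m)) * (real m / real (n choose r)) ^ k"
    by (rule union_bound[OF B F])
  moreover have "real (card F) * real (card (hypergraphs r n m)) * (real m / real (n choose r)) ^ k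
     \<le> real (card (hypergraphs r n m)) * (c * real m ^ k)"
    by (rule ub_alg[OF Npos _ _ cF]) simp_all
  ultimately show ?thesis by linarith
qed

definition bad_b :: "nat \<Rightarrow> nat \<Rightarrow> nat \<Rightarrow> nat set set set" where
  "bad_b r n m = {H \<in> hypergraphs r n m. \<exists>e\<in>H. \<exists>f\<in>H. \<exists>g\<in>H. linked e f \<and> linked f g \<and> e \<noteq> g}"

lemma bound_b:
  assumes rn: "0 < r" "r \<le> n"
  shows "real (card (bad_b r n m)) \<le> real (card (hypergraphs r n m)) * (real r ^ 8 * real m ^ 3 / real n ^ 4)"
proof -
  let ?E = "edges r n" let ?N = "real (n choose r)" let ?x = "real r / real n"
  let ?q = "real r ^ 2 * ?N * ?x ^ 2"
  let ?T = "Sigma ?E (\<lambda>e. Sigma (nbr r n e 2 - {e}) (\<lambda>f. nbr r n f 2 - {e,f}))"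
  let ?F = "(\<lambda>(e,f,g). {e,f,g}) ` ?T"
  have fT: "finite ?T" by simp
  have B: "bad_b r n m \<subseteq> {H \<in> hypergraphs r n m. \<exists>S\<in>?F. S \<subseteq> H}"
  proof
    fix H assume H: "H \<in> bad_b r n m"
    then obtain e f g where ef: "e \<in> H" "f \<in> H" "g \<in> H" "linked e f" "linked f g" "e \<noteq> g"
      unfolding bad_b_def by blast
    have HE: "H \<subseteq> ?E" using H unfolding bad_b_def hyp_alt by blast
    have E3: "e \<in> ?E" "f \<in> ?E" "g \<in> ?E" using ef HE by auto
    have ne: "e \<noteq> f" "f \<noteq> g" using ef unfolding linked_def by auto
    have "f \<in> nbr r n e 2 - {e}" using linked_nbr[OF E3(2) ef(4)] ne by simp
    moreover have "g \<in> nbr r n f 2 - {e,f}" using linked_nbr[OF E3(3) ef(5)] ne ef(6) by simp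
    ultimately have "(e,f,g) \<in> ?T" using E3(1) by (intro SigmaI)
    then have inF: "{e,f,g} \<in> ?F" by (rule rev_image_eqI) simp
    have sH: "{e,f,g} \<subseteq> H" using ef by simp
    have HH: "H \<in> hypergraphs r n m" using H unfolding bad_b_def by simp
    show "H \<in> {H \<in> hypergraphs r n m. \<exists>S\<in>?F. S \<subseteq> H}"
      unfolding mem_Collect_eq using HH sH inF by (intro conjI bexI[where x="{e,f,g}"])
  qed
  have F: "\<forall>S\<in>?F. S \<subseteq> ?E \<and> card S = 3"
  proof
    fix S assume "S \<in> ?F"
    then obtain p where p: "p \<in> ?T" "S = (case p of (e,f,g) \<Rightarrow> {e,f,g})" by (rule imageE)
    obtain e f g where pe: "p = (e,f,g)" by (metis prod_cases3)
    have "e \<in> ?E" "f \<in> nbr r n e 2 - {e}" "g \<in> nbr r n f 2 - {e,f}" using p(1) pe by auto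
    then have "e \<in> ?E" "f \<in> ?E" "g \<in> ?E" "f \<noteq> e" "g \<noteq> e" "g \<noteq> f" using nbr_edges by auto
    then show "S \<subseteq> ?E \<and> card S = 3" using p(2) pe by simp
  qed
  have cF: "real (card ?F) \<le> ?N ^ 3 * (real r ^ 4 * ?x ^ 4)"
  proof -
    have "card ?F \<le> card ?T" by (rule card_image_le[OF fT])
    then have "real (card ?F) \<le> real (card ?T)" by (simp only: of_nat_le_iff)
    also have "\<dots> \<le> real (card ?E) * (?q * ?q)"
    proof (rule card_Sigma_le[OF finite_edges], rule ballI)
      fix a assume a: "a \<in> ?E"
      have "real (card (Sigma (nbr r n a 2 - {a}) (\<lambda>f. nbr r n f 2 - {a,f}))) \<le> real (card (nbr r n a 2 - {a})) * ?q"
      proof (rule card_Sigma_le, rule finite_Diff[OF finite_nbr], rule ballI)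
        fix b assume "b \<in> nbr r n a 2 - {a}"
        then have "b \<in> ?E" using nbr_edges by blast
        then show "finite (nbr r n b 2 - {a,b}) \<and> real (card (nbr r n b 2 - {a,b})) \<le> ?q"
          by (rule card_nbr_minus)
      qed
      also have "\<dots> \<le> ?q * ?q"
        using card_nbr_minus[OF a, of 2 "{a}"] by (intro mult_right_mono) simp_all
      finally show "finite (Sigma (nbr r n a 2 - {a}) (\<lambda>f. nbr r n f 2 - {a,f})) \<and>
          real (card (Sigma (nbr r n a 2 - {a}) (\<lambda>f. nbr r n f 2 - {a,f}))) \<le> ?q * ?q"
        by simp
    qed
    also have "\<dots> = ?N ^ 3 * (real r ^ 4 * ?x ^ 4)" by (simp add: card_edges power_divide field_simps power3_eq_cube)
    finally show ?thesis .
  qed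
  have "real (card (bad_b r n m)) \<le> real (card (hypergraphs r n m)) * ((real r ^ 4 * ?x ^ 4) * real m ^ 3)"
    by (rule ub_final[OF B F _ cF rn]) simp
  also have "\<dots> = real (card (hypergraphs r n m)) * (real r ^ 8 * real m ^ 3 / real n ^ 4)"
    by (simp add: power_divide field_simps)
  finally show ?thesis .
qed

definition bad_c :: "nat \<Rightarrow> nat \<Rightarrow> nat \<Rightarrow> nat set set set" where
  "bad_c r n m = {H \<in> hypergraphs r n m. \<exists>a\<in>H. \<exists>b\<in>H. \<exists>c\<in>H. \<exists>d\<in>H.
     linked a b \<and> linked c d \<and> a \<noteq> c \<and> a \<noteq> d \<and> b \<noteq> c \<and> b \<noteq> d \<and> (a \<union> b) \<inter> c \<noteq> {}}"

lemma bound_c: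
  assumes rn: "0 < r" "r \<le> n"
  shows "real (card (bad_c r n m)) \<le> real (card (hypergraphs r n m)) * (2 * real r ^ 10 * real m ^ 4 / real n ^ 5)"
proof -
  let ?E = "edges r n" let ?N = "real (n choose r)" let ?x = "real r / real n"
  let ?q = "real r ^ 2 * ?N * ?x ^ 2"
  let ?q1 = "real (2 * r) * ?N * ?x"
  let ?T = "Sigma ?E (\<lambda>a. Sigma (nbr r n a 2 - {a}) (\<lambda>b. Sigma (nbr r n (a \<union> b) 1 - {a,b}) (\<lambda>c. nbr r n c 2 - {a,b,c})))"
  let ?F = "(\<lambda>(a,b,c,d). {a,b,c,d}) ` ?T"
  have fT: "finite ?T" by simp
  have B: "bad_c r n m \<subseteq> {H \<in> hypergraphs r n m. \<exists>S\<in>?F. S \<subseteq> H}"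
  proof
    fix H assume H: "H \<in> bad_c r n m"
    then obtain a b c d where ef: "a \<in> H" "b \<in> H" "c \<in> H" "d \<in> H" "linked a b" "linked c d"
      "a \<noteq> c" "a \<noteq> d" "b \<noteq> c" "b \<noteq> d" "(a \<union> b) \<inter> c \<noteq> {}"
      unfolding bad_c_def by blast
    have HE: "H \<subseteq> ?E" using H unfolding bad_c_def hyp_alt by blast
    have E4: "a \<in> ?E" "b \<in> ?E" "c \<in> ?E" "d \<in> ?E" using ef HE by auto
    have ne: "a \<noteq> b" "c \<noteq> d" using ef unfolding linked_def by auto
    have fab: "finite (a \<union> b)" using E4 edges_finite_card by blast
    have "1 \<le> card ((a \<union> b) \<inter> c)" using ef(11) fab
      by (metis One_nat_def Suc_leI card_gt_0_iff finite_Int)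
    then have c1: "c \<in> nbr r n (a \<union> b) 1" using E4(3) unfolding nbr_def by simp
    have "b \<in> nbr r n a 2 - {a}" using linked_nbr[OF E4(2) ef(5)] ne by simp
    moreover have "c \<in> nbr r n (a \<union> b) 1 - {a,b}" using c1 ef by simp
    moreover have "d \<in> nbr r n c 2 - {a,b,c}" using linked_nbr[OF E4(4) ef(6)] ne ef by simp
    ultimately have "(a,b,c,d) \<in> ?T" using E4(1) by (intro SigmaI)
    then have inF: "{a,b,c,d} \<in> ?F" by (rule rev_image_eqI) simp
    have sH: "{a,b,c,d} \<subseteq> H" using ef by simp
    have HH: "H \<in> hypergraphs r n m" using H unfolding bad_c_def by simp
    show "H \<in> {H \<in> hypergraphs r n m. \<exists>S\<in>?F. S \<subseteq> H}"
      unfolding mem_Collect_eq using HH sH inF by (intro conjI bexI[where x="{a,b,c,d}"])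
  qed
  have F: "\<forall>S\<in>?F. S \<subseteq> ?E \<and> card S = 4"
  proof
    fix S assume "S \<in> ?F"
    then obtain p where p: "p \<in> ?T" "S = (case p of (a,b,c,d) \<Rightarrow> {a,b,c,d})" by (rule imageE)
    obtain a b c d where pe: "p = (a,b,c,d)" by (metis prod_cases4)
    have "a \<in> ?E" "b \<in> nbr r n a 2 - {a}" "c \<in> nbr r n (a \<union> b) 1 - {a,b}" "d \<in> nbr r n c 2 - {a,b,c}"
      using p(1) pe by auto
    then have "a \<in> ?E" "b \<in> ?E" "c \<in> ?E" "d \<in> ?E" "b \<noteq> a" "c \<noteq> a" "c \<noteq> b" "d \<noteq> a" "d \<noteq> b" "d \<noteq> c"
      using nbr_edges by auto
    then show "S \<subseteq> ?E \<and> card S = 4" using p(2) pe by simp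
  qed
  have cF: "real (card ?F) \<le> ?N ^ 4 * (2 * real r ^ 5 * ?x ^ 5)"
  proof -
    have "card ?F \<le> card ?T" by (rule card_image_le[OF fT])
    then have "real (card ?F) \<le> real (card ?T)" by (simp only: of_nat_le_iff)
    also have "\<dots> \<le> real (card ?E) * (?q * (?q1 * ?q))"
    proof (rule card_Sigma_le[OF finite_edges], rule ballI)
      fix a assume a: "a \<in> ?E"
      have "real (card (Sigma (nbr r n a 2 - {a}) (\<lambda>b. Sigma (nbr r n (a \<union> b) 1 - {a,b}) (\<lambda>c. nbr r n c 2 - {a,b,c}))))
         \<le> real (card (nbr r n a 2 - {a})) * (?q1 * ?q)"
      proof (rule card_Sigma_le, rule finite_Diff[OF finite_nbr], rule ballI)
        fix b assume b: "b \<in> nbr r n a 2 - {a}"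
        then have bE: "b \<in> ?E" using nbr_edges by blast
        have fab: "finite (a \<union> b)" "card (a \<union> b) \<le> 2 * r"
        proof -
          show "finite (a \<union> b)" using a bE edges_finite_card by blast
          have "card (a \<union> b) \<le> card a + card b" by (rule card_Un_le)
          then show "card (a \<union> b) \<le> 2 * r" using a bE edges_finite_card by simp
        qed
        have "real (card (Sigma (nbr r n (a \<union> b) 1 - {a,b}) (\<lambda>c. nbr r n c 2 - {a,b,c})))
            \<le> real (card (nbr r n (a \<union> b) 1 - {a,b})) * ?q"
        proof (rule card_Sigma_le, rule finite_Diff[OF finite_nbr], rule ballI)
          fix c assume "c \<in> nbr r n (a \<union> b) 1 - {a,b}"
          then have "c \<in> ?E" using nbr_edges by blast
          then show "finite (nbr r n c 2 - {a,b,c}) \<and> real (card (nbr r n c 2 - {a,b,c})) \<le> ?q"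
            by (rule card_nbr_minus)
        qed
        also have "\<dots> \<le> ?q1 * ?q"
        proof (rule mult_right_mono)
          have "card (nbr r n (a \<union> b) 1 - {a,b}) \<le> card (nbr r n (a \<union> b) 1)" by (rule card_mono[OF finite_nbr]) blast
          then have "real (card (nbr r n (a \<union> b) 1 - {a,b})) \<le> real (card (nbr r n (a \<union> b) 1))" by (simp only: of_nat_le_iff)
          then show "real (card (nbr r n (a \<union> b) 1 - {a,b})) \<le> ?q1"
            using card_nbr_1[OF fab, of r n] by linarith
        qed simp
        finally show "finite (Sigma (nbr r n (a \<union> b) 1 - {a,b}) (\<lambda>c. nbr r n c 2 - {a,b,c})) \<and>
          real (card (Sigma (nbr r n (a \<union> b) 1 - {a,b}) (\<lambda>c. nbr r n c 2 - {a,b,c}))) \<le> ?q1 * ?q"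
          by simp
      qed
      also have "\<dots> \<le> ?q * (?q1 * ?q)"
        using card_nbr_minus[OF a, of 2 "{a}"] by (intro mult_right_mono) simp_all
      finally show "finite (Sigma (nbr r n a 2 - {a}) (\<lambda>b. Sigma (nbr r n (a \<union> b) 1 - {a,b}) (\<lambda>c. nbr r n c 2 - {a,b,c}))) \<and>
          real (card (Sigma (nbr r n a 2 - {a}) (\<lambda>b. Sigma (nbr r n (a \<union> b) 1 - {a,b}) (\<lambda>c. nbr r n c 2 - {a,b,c})))) \<le> ?q * (?q1 * ?q)"
        by simp
    qed
    also have "\<dots> = ?N ^ 4 * (2 * real r ^ 5 * ?x ^ 5)"
      by (simp add: card_edges power_divide field_simps eval_nat_numeral)
    finally show ?thesis .
  qed
  have "real (card (bad_c r n m)) \<le> real (card (hypergraphs r n m)) * ((2 * real r ^ 5 * ?x ^ 5) * real m ^ 4)"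
    by (rule ub_final[OF B F _ cF rn]) simp
  also have "\<dots> = real (card (hypergraphs r n m)) * (2 * real r ^ 10 * real m ^ 4 / real n ^ 5)"
    by (simp add: power_divide field_simps)
  finally show ?thesis .
qed

definition LP :: "nat \<Rightarrow> nat \<Rightarrow> nat set set set" where
  "LP r n = (\<lambda>(e,f). {e,f}) ` (Sigma (edges r n) (\<lambda>e. nbr r n e 2 - {e}))"

lemma finite_LP[simp]: "finite (LP r n)"
  unfolding LP_def by simp

lemma LP_elem: "P \<in> LP r n \<Longrightarrow> P \<subseteq> edges r n \<and> card P = 2"
proof -
  assume "P \<in> LP r n"
  then obtain p where p: "p \<in> Sigma (edges r n) (\<lambda>e. nbr r n e 2 - {e})" "P = (case p of (e,f) \<Rightarrow> {e,f})"
    unfolding LP_def by (rule imageE)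
  obtain e f where pe: "p = (e,f)" by (cases p)
  have "e \<in> edges r n" "f \<in> nbr r n e 2" "f \<noteq> e" using p(1) pe by auto
  then have "e \<in> edges r n" "f \<in> edges r n" "f \<noteq> e" using nbr_edges by auto
  then show "P \<subseteq> edges r n \<and> card P = 2" using p(2) pe by simp
qed

lemma linked_LP: "e \<in> edges r n \<Longrightarrow> f \<in> edges r n \<Longrightarrow> linked e f \<Longrightarrow> {e,f} \<in> LP r n"
proof -
  assume a: "e \<in> edges r n" "f \<in> edges r n" "linked e f"
  then have "f \<in> nbr r n e 2 - {e}" using linked_nbr[OF a(2) a(3)] unfolding linked_def by auto
  then have "(e,f) \<in> Sigma (edges r n) (\<lambda>e. nbr r n e 2 - {e})" using a(1) by (intro SigmaI)
  then show ?thesis unfolding LP_def by (rule rev_image_eqI) simp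
qed

lemma card_LP:
  assumes "0 < r" "r \<le> n"
  shows "real (card (LP r n)) \<le> real (n choose r) ^ 2 * (real r ^ 2 * (real r / real n) ^ 2)"
proof -
  let ?E = "edges r n" let ?N = "real (n choose r)" let ?x = "real r / real n"
  let ?T = "Sigma ?E (\<lambda>e. nbr r n e 2 - {e})"
  have "card (LP r n) \<le> card ?T" unfolding LP_def by (rule card_image_le) simp
  then have "real (card (LP r n)) \<le> real (card ?T)" by (simp only: of_nat_le_iff)
  also have "\<dots> \<le> real (card ?E) * (real r ^ 2 * ?N * ?x ^ 2)"
    by (rule card_Sigma_le[OF finite_edges]) (use card_nbr_minus in blast)
  also have "\<dots> = ?N ^ 2 * (real r ^ 2 * ?x ^ 2)" by (simp add: card_edges power2_eq_square)
  finally show ?thesis .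
qed

definition bad_d :: "nat \<Rightarrow> nat \<Rightarrow> nat \<Rightarrow> nat \<Rightarrow> nat set set set" where
  "bad_d r n m k = {H \<in> hypergraphs r n m. \<exists>A. A \<subseteq> LP r n \<and> card A = k \<and> pairwise disjnt A \<and> \<Union>A \<subseteq> H}"

lemma bound_d:
  assumes rn: "0 < r" "r \<le> n"
  shows "real (card (bad_d r n m k)) \<le> real (card (hypergraphs r n m)) * ((real r ^ 4 * real m ^ 2 / real n ^ 2) ^ k / fact k)"
proof -
  let ?E = "edges r n" let ?N = "real (n choose r)" let ?x = "real r / real n"
  let ?A = "{A. A \<subseteq> LP r n \<and> card A = k \<and> pairwise disjnt A}"
  let ?F = "Union ` ?A"
  have fA: "finite ?A" by (rule finite_subset[where B="Pow (LP r n)"]) (blast, simp)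
  have B: "bad_d r n m k \<subseteq> {H \<in> hypergraphs r n m. \<exists>S\<in>?F. S \<subseteq> H}"
  proof
    fix H assume H: "H \<in> bad_d r n m k"
    then obtain A where A: "A \<in> ?A" "\<Union>A \<subseteq> H" unfolding bad_d_def by blast
    have inF: "\<Union>A \<in> ?F" using A(1) by (rule imageI)
    have HH: "H \<in> hypergraphs r n m" using H unfolding bad_d_def by simp
    show "H \<in> {H \<in> hypergraphs r n m. \<exists>S\<in>?F. S \<subseteq> H}"
      unfolding mem_Collect_eq using HH A(2) inF by (intro conjI bexI[where x="\<Union>A"])
  qed
  have F: "\<forall>S\<in>?F. S \<subseteq> ?E \<and> card S = 2 * k"
  proof
    fix S assume "S \<in> ?F"
    then obtain A where A: "A \<subseteq> LP r n" "card A = k" "pairwise disjnt A" "S = \<Union>A" by blast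
    have el: "\<And>P. P \<in> A \<Longrightarrow> P \<subseteq> ?E \<and> card P = 2" using A(1) LP_elem by blast
    have "\<And>P. P \<in> A \<Longrightarrow> finite P" using el by (metis card.infinite zero_neq_numeral)
    then have "card S = sum card A" using A(3,4) card_Union_disjoint by blast
    also have "\<dots> = sum (\<lambda>_. 2) A" using el by (intro sum.cong) auto
    also have "\<dots> = 2 * k" using A(2) by simp
    finally show "S \<subseteq> ?E \<and> card S = 2 * k" using el A(4) by blast
  qed
  have cF: "real (card ?F) \<le> ?N ^ (2 * k) * ((real r ^ 2 * ?x ^ 2) ^ k / fact k)"
  proof -
    have "card ?F \<le> card ?A" by (rule card_image_le[OF fA])
    also have "\<dots> \<le> card {A. A \<subseteq> LP r n \<and> card A = k}"
      by (rule card_mono) (rule finite_subset[where B="Pow (LP r n)"], blast, simp, blast)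
    also have "\<dots> = card (LP r n) choose k" by (rule n_subsets[OF finite_LP])
    finally have "real (card ?F) \<le> real (card (LP r n) choose k)" by (simp only: of_nat_le_iff)
    also have "\<dots> \<le> real (card (LP r n)) ^ k / fact k" by (rule choose_le_pow_fact)
    also have "\<dots> \<le> (?N ^ 2 * (real r ^ 2 * ?x ^ 2)) ^ k / fact k"
      by (intro divide_right_mono power_mono card_LP[OF rn]) simp_all
    also have "\<dots> = ?N ^ (2 * k) * ((real r ^ 2 * ?x ^ 2) ^ k / fact k)"
      by (simp add: power_mult_distrib power_mult)
    finally show ?thesis .
  qed
  have "real (card (bad_d r n m k)) \<le> real (card (hypergraphs r n m)) * (((real r ^ 2 * ?x ^ 2) ^ k / fact k) * real m ^ (2 * k))"
    by (rule ub_final[OF B F _ cF rn]) (simp add: fA)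
  also have "\<dots> = real (card (hypergraphs r n m)) * ((real r ^ 4 * real m ^ 2 / real n ^ 2) ^ k / fact k)"
  proof -
    have e1: "real r ^ 2 * ?x ^ 2 * real m ^ 2 = real r ^ 4 * real m ^ 2 / real n ^ 2"
      by (simp add: power_divide field_simps eval_nat_numeral)
    have "((real r ^ 2 * ?x ^ 2) ^ k / fact k) * real m ^ (2 * k) = (real r ^ 2 * ?x ^ 2 * real m ^ 2) ^ k / fact k"
      unfolding power_mult[of "real m" 2 k] power_mult_distrib[of "real r ^ 2 * ?x ^ 2" "real m ^ 2" k] by simp
    then show ?thesis using e1 by simp
  qed
  finally show ?thesis .
qed

definition bad_e :: "nat \<Rightarrow> nat \<Rightarrow> nat \<Rightarrow> nat \<Rightarrow> nat set set set" where
  "bad_e r n m k = {H \<in> hypergraphs r n m. \<exists>v\<in>{1..n}. k \<le> degree H v}"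

lemma bound_e:
  assumes rn: "0 < r" "r \<le> n"
  shows "real (card (bad_e r n m k)) \<le> real (card (hypergraphs r n m)) * (real n * (real r * real m / real n) ^ k / fact k)"
proof -
  let ?E = "edges r n" let ?N = "real (n choose r)" let ?x = "real r / real n"
  let ?Ev = "\<lambda>v. nbr r n {v} 1"
  let ?F = "\<Union>v\<in>{1..n}. {S. S \<subseteq> ?Ev v \<and> card S = k}"
  have fS: "\<And>v. finite {S. S \<subseteq> ?Ev v \<and> card S = k}"
    by (rule finite_subset[where B="Pow (nbr r n {_} 1)"]) (blast, simp)
  have fF: "finite ?F" by (rule finite_UN_I) (simp, rule fS)
  have B: "bad_e r n m k \<subseteq> {H \<in> hypergraphs r n m. \<exists>S\<in>?F. S \<subseteq> H}"
  proof
    fix H assume H: "H \<in> bad_e r n m k"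
    then obtain v where v: "v \<in> {1..n}" "k \<le> card {e \<in> H. v \<in> e}" unfolding bad_e_def degree_def by blast
    then obtain S where S: "S \<subseteq> {e \<in> H. v \<in> e}" "card S = k" by (meson obtain_subset_with_card_n)
    have HE: "H \<subseteq> ?E" using H unfolding bad_e_def hyp_alt by blast
    have "S \<subseteq> ?Ev v"
    proof
      fix e assume "e \<in> S"
      then have e: "e \<in> ?E" "v \<in> e" using S HE by auto
      then have "finite e" using edges_finite_card by blast
      then have "1 \<le> card ({v} \<inter> e)" using e(2) by simp
      then show "e \<in> ?Ev v" using e(1) unfolding nbr_def by simp
    qed
    then have inF: "S \<in> ?F" using v(1) S(2) by blast
    have sH: "S \<subseteq> H" using S by blast
    have HH: "H \<in> hypergraphs r n m" using H unfolding bad_e_def by simp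
    show "H \<in> {H \<in> hypergraphs r n m. \<exists>S\<in>?F. S \<subseteq> H}"
      unfolding mem_Collect_eq using HH sH inF by (intro conjI bexI[where x="S"])
  qed
  have F: "\<forall>S\<in>?F. S \<subseteq> ?E \<and> card S = k" using nbr_edges by blast
  have cF: "real (card ?F) \<le> ?N ^ k * (real n * ?x ^ k / fact k)"
  proof -
    have "card ?F \<le> (\<Sum>v\<in>{1..n}. card {S. S \<subseteq> ?Ev v \<and> card S = k})" by (rule card_UN_le) simp
    then have "real (card ?F) \<le> (\<Sum>v\<in>{1..n}. real (card {S. S \<subseteq> ?Ev v \<and> card S = k}))"
      unfolding of_nat_sum[symmetric] of_nat_le_iff .
    also have "\<dots> \<le> (\<Sum>v\<in>{1..n}. (?N * ?x) ^ k / fact k)"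
    proof (rule sum_mono)
      fix v :: nat
      have "real (card {S. S \<subseteq> ?Ev v \<and> card S = k}) = real (card (?Ev v) choose k)"
        by (simp only: n_subsets[OF finite_nbr])
      also have "\<dots> \<le> real (card (?Ev v)) ^ k / fact k" by (rule choose_le_pow_fact)
      also have "\<dots> \<le> (?N * ?x) ^ k / fact k"
        using card_nbr_1[of "{v}" 1 r n] by (intro divide_right_mono power_mono) simp_all
      finally show "real (card {S. S \<subseteq> ?Ev v \<and> card S = k}) \<le> (?N * ?x) ^ k / fact k" .
    qed
    also have "\<dots> = ?N ^ k * (real n * ?x ^ k / fact k)" by (simp add: power_mult_distrib[symmetric] mult.assoc)
    finally show ?thesis .
  qed
  have "real (card (bad_e r n m k)) \<le> real (card (hypergraphs r n m)) * ((real n * ?x ^ k / fact k) * real m ^ k)"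
    by (rule ub_final[OF B F fF cF rn])
  also have "\<dots> = real (card (hypergraphs r n m)) * (real n * (real r * real m / real n) ^ k / fact k)"
    by (simp add: power_divide power_mult_distrib)
  finally show ?thesis .
qed

lemma link_sym: "sym (link_rel H)"
  unfolding sym_def link_rel_def using linked_sym by blast

lemma rt_sym: "(e, f) \<in> (link_rel H)\<^sup>* \<Longrightarrow> (f, e) \<in> (link_rel H)\<^sup>*"
  using sym_rtrancl[OF link_sym[of H]] unfolding sym_def by blast

lemma comp_self: "e \<in> H \<Longrightarrow> e \<in> component H e"
  unfolding component_def by simp

lemma comp_sub: "component H e \<subseteq> H"
  unfolding component_def by blast

lemma comp_eq:
  assumes "f \<in> component H e"
  shows "component H f = component H e"
proof -
  have ef: "(e, f) \<in> (link_rel H)\<^sup>*" using assms unfolding component_def by simp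
  have fe: "(f, e) \<in> (link_rel H)\<^sup>*" using rt_sym[OF ef] .
  show ?thesis unfolding component_def
    using rtrancl_trans[OF ef] rtrancl_trans[OF fe] by blast
qed

lemma comp_disj:
  assumes "component H e \<noteq> component H f"
  shows "component H e \<inter> component H f = {}"
proof (rule ccontr)
  assume "component H e \<inter> component H f \<noteq> {}"
  then obtain x where "x \<in> component H e" "x \<in> component H f" by blast
  then have "component H x = component H e" "component H x = component H f" using comp_eq by blast+
  then show False using assms by simp
qed

lemma link_rel_linked: "(a, b) \<in> link_rel H \<Longrightarrow> a \<in> H \<and> b \<in> H \<and> linked a b"
  unfolding link_rel_def by simp

lemma comp2:
  assumes nb: "\<And>a b c. a \<in> H \<Longrightarrow> b \<in> H \<Longrightarrow> c \<in> H \<Longrightarrow> linked a b \<Longrightarrow> linked b c \<Longrightarrow> a = c"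
    and e: "e \<in> H" and fin: "finite H" and c2: "2 \<le> card (component H e)"
  shows "\<exists>g. component H e = {e, g} \<and> linked e g \<and> g \<in> H"
proof -
  have fc: "finite (component H e)" using fin comp_sub finite_subset by blast
  obtain f where f: "f \<in> component H e" "f \<noteq> e"
  proof -
    have "\<not> component H e \<subseteq> {e}"
    proof
      assume "component H e \<subseteq> {e}"
      then have "card (component H e) \<le> card {e}" by (rule card_mono[rotated]) simp
      then show False using c2 by simp
    qed
    then show ?thesis using that by blast
  qed
  have ef: "(e, f) \<in> (link_rel H)\<^sup>*" using f unfolding component_def by simp
  obtain g where g: "(e, g) \<in> link_rel H"
    using ef f(2) by (metis converse_rtranclE)
  have gl: "g \<in> H" "linked e g" using link_rel_linked[OF g] by auto
  have "\<And>y. (e, y) \<in> (link_rel H)\<^sup>* \<Longrightarrow> y \<in> {e, g}"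
  proof -
    fix y assume "(e, y) \<in> (link_rel H)\<^sup>*"
    then show "y \<in> {e, g}"
    proof (induction rule: rtrancl_induct)
      case base
      then show ?case by simp
    next
      case (step y z)
      have z: "y \<in> H" "z \<in> H" "linked y z" using link_rel_linked[OF step(2)] by auto
      show ?case
      proof (cases "y = e")
        case True
        then have "z = g" using nb[OF z(2) e gl(1) linked_sym[OF z(3)[unfolded True]] gl(2)] by simp
        then show ?thesis by simp
      next
        case False
        then have "y = g" using step(3) by simp
        then have "e = z" using nb[OF e gl(1) z(2) gl(2)] z(3) by simp
        then show ?thesis by simp
      qed
    qed
  qed
  then have "component H e \<subseteq> {e, g}" unfolding component_def by blast
  moreover have "{e, g} \<subseteq> component H e" using e gl g unfolding component_def by auto
  ultimately show ?thesis using gl by blast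
qed

lemma bad_c_intro:
  assumes "H \<in> hypergraphs r n m" "a \<in> H" "b \<in> H" "c \<in> H" "d \<in> H"
    "linked a b" "linked c d" "a \<noteq> c" "a \<noteq> d" "b \<noteq> c" "b \<noteq> d" "(a \<union> b) \<inter> c \<noteq> {}"
  shows "H \<in> bad_c r n m"
  unfolding bad_c_def mem_Collect_eq
  apply (rule conjI[OF assms(1)])
  apply (rule bexI[OF _ assms(2)], rule bexI[OF _ assms(3)], rule bexI[OF _ assms(4)], rule bexI[OF _ assms(5)])
  using assms(6-12) by (intro conjI)

lemma bad_a_intro:
  assumes "H \<in> hypergraphs r n m" "e \<in> H" "f \<in> H" "e \<noteq> f" "3 \<le> card (e \<inter> f)"
  shows "H \<in> bad_a r n m"
  unfolding bad_a_def mem_Collect_eq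
  apply (rule conjI[OF assms(1)])
  apply (rule bexI[OF _ assms(2)], rule bexI[OF _ assms(3)])
  using assms(4,5) by (intro conjI)

lemma struct_plus:
  assumes H: "H \<in> hypergraphs r n m" and nplus: "H \<notin> hypergraphs_plus r n m"
    and M4: "0 \<le> M4 r n" and M0: "0 \<le> M0 r n"
  shows "H \<in> bad_a r n m \<union> bad_b r n m \<union> bad_c r n m \<union> bad_d r n m (nat (M4 r n) + 1) \<union> bad_e r n m (nat (M0 r n) + 1)"
proof (rule ccontr)
  assume nbad: "H \<notin> bad_a r n m \<union> bad_b r n m \<union> bad_c r n m \<union> bad_d r n m (nat (M4 r n) + 1) \<union> bad_e r n m (nat (M0 r n) + 1)"
  have n5: "H \<notin> bad_a r n m \<and> H \<notin> bad_b r n m \<and> H \<notin> bad_c r n m \<and> H \<notin> bad_d r n m (nat (M4 r n) + 1) \<and> H \<notin> bad_e r n m (nat (M0 r n) + 1)"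
    using nbad by (simp only: Un_iff de_Morgan_disj conj_assoc simp_thms)
  have na: "H \<notin> bad_a r n m" using n5 by (rule conjunct1)
  have nbb: "H \<notin> bad_b r n m" using n5 by (elim conjE)
  have nc: "H \<notin> bad_c r n m" using n5 by (elim conjE)
  have nd: "H \<notin> bad_d r n m (nat (M4 r n) + 1)" using n5 by (elim conjE)
  have ne5: "H \<notin> bad_e r n m (nat (M0 r n) + 1)" using n5 by (elim conjE)
  have HE: "H \<subseteq> edges r n" using H unfolding hyp_alt by blast
  have fin: "finite H" using finite_subset[OF HE finite_edges] .
  have nb: "\<And>a b c. a \<in> H \<Longrightarrow> b \<in> H \<Longrightarrow> c \<in> H \<Longrightarrow> linked a b \<Longrightarrow> linked b c \<Longrightarrow> a = c"
  proof (rule ccontr)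
    fix a b c assume abc: "a \<in> H" "b \<in> H" "c \<in> H" "linked a b" "linked b c" "a \<noteq> c"
    have "H \<in> bad_b r n m" unfolding bad_b_def mem_Collect_eq
      apply (rule conjI[OF H])
      apply (rule bexI[OF _ abc(1)], rule bexI[OF _ abc(2)], rule bexI[OF _ abc(3)])
      using abc(4-6) by (intro conjI)
    then show False using nbb by contradiction
  qed
  have cl: "\<And>C. C \<in> clusters H \<Longrightarrow> \<exists>e g. C = component H e \<and> C = {e, g} \<and> linked e g \<and> e \<in> H \<and> g \<in> H"
  proof -
    fix C assume "C \<in> clusters H"
    then obtain e where e: "e \<in> H" "C = component H e" "2 \<le> card C" unfolding clusters_def by blast
    then show "\<exists>e g. C = component H e \<and> C = {e, g} \<and> linked e g \<and> e \<in> H \<and> g \<in> H"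
    proof -
      have "\<exists>g. component H e = {e, g} \<and> linked e g \<and> g \<in> H"
      proof (rule comp2)
        show "\<And>a b c. a \<in> H \<Longrightarrow> b \<in> H \<Longrightarrow> c \<in> H \<Longrightarrow> linked a b \<Longrightarrow> linked b c \<Longrightarrow> a = c"
          by (rule nb)
        show "e \<in> H" "finite H" "2 \<le> card (component H e)" using e fin by auto
      qed
      then obtain g where "component H e = {e, g} \<and> linked e g \<and> g \<in> H" by blast
      then show ?thesis using e by (intro exI[of _ e] exI[of _ g]) simp
    qed
  qed
  have cdisj: "\<And>C1 C2. C1 \<in> clusters H \<Longrightarrow> C2 \<in> clusters H \<Longrightarrow> C1 \<noteq> C2 \<Longrightarrow> C1 \<inter> C2 = {}"
  proof -
    fix C1 C2 assume C: "C1 \<in> clusters H" "C2 \<in> clusters H" "C1 \<noteq> C2"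
    obtain e1 where "C1 = component H e1" using C(1) unfolding clusters_def by blast
    moreover obtain e2 where "C2 = component H e2" using C(2) unfolding clusters_def by blast
    ultimately show "C1 \<inter> C2 = {}" using comp_disj C(3) by simp
  qed
  have c1: "\<forall>e\<in>H. \<forall>f\<in>H. e \<noteq> f \<longrightarrow> card (e \<inter> f) \<le> 2"
  proof (intro ballI impI)
    fix e f assume ef: "e \<in> H" "f \<in> H" "e \<noteq> f"
    show "card (e \<inter> f) \<le> 2"
    proof (rule ccontr)
      assume "\<not> card (e \<inter> f) \<le> 2"
      then have "3 \<le> card (e \<inter> f)" by linarith
      then have "H \<in> bad_a r n m" by (rule bad_a_intro[OF H ef])
      then show False using na by contradiction
    qed
  qed
  have c2: "\<forall>C\<in>clusters H. card C = 2"
  proof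
    fix C assume "C \<in> clusters H"
    then obtain e g where eg: "C = {e, g}" "linked e g" by (meson cl)
    then have "e \<noteq> g" unfolding linked_def by simp
    then show "card C = 2" using eg(1) by simp
  qed
  have c3: "\<forall>C1\<in>clusters H. \<forall>C2\<in>clusters H. C1 \<noteq> C2 \<longrightarrow> \<Union>C1 \<inter> \<Union>C2 = {}"
  proof (intro ballI impI)
    fix C1 C2 assume C: "C1 \<in> clusters H" "C2 \<in> clusters H" "C1 \<noteq> C2"
    obtain e1 g1 where 1: "C1 = {e1, g1}" "linked e1 g1" "e1 \<in> H" "g1 \<in> H" using cl[OF C(1)] by blast
    obtain e2 g2 where 2: "C2 = {e2, g2}" "linked e2 g2" "e2 \<in> H" "g2 \<in> H" using cl[OF C(2)] by blast
    have d: "C1 \<inter> C2 = {}" using cdisj C by blast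
    have ne: "e1 \<noteq> e2" "e1 \<noteq> g2" "g1 \<noteq> e2" "g1 \<noteq> g2" using d 1 2 by auto
    show "\<Union>C1 \<inter> \<Union>C2 = {}"
    proof (rule ccontr)
      assume "\<Union>C1 \<inter> \<Union>C2 \<noteq> {}"
      then obtain v where v: "v \<in> e1 \<union> g1" "v \<in> e2 \<or> v \<in> g2" using 1 2 by auto
      show False
      proof (cases "v \<in> e2")
        case True
        then have "(e1 \<union> g1) \<inter> e2 \<noteq> {}" using v by blast
        then have "H \<in> bad_c r n m" using bad_c_intro[OF H 1(3) 1(4) 2(3) 2(4) 1(2) 2(2) ne] by simp
        then show False using nc by contradiction
      next
        case False
        then have "(e1 \<union> g1) \<inter> g2 \<noteq> {}" using v by blast
        moreover have "linked g2 e2" using 2 linked_sym by blast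
        ultimately have "H \<in> bad_c r n m" using bad_c_intro[OF H 1(3) 1(4) 2(4) 2(3) 1(2) _ ne(2) ne(1) ne(4) ne(3)] by simp
        then show False using nc by contradiction
      qed
    qed
  qed
  have clH: "\<And>C. C \<in> clusters H \<Longrightarrow> C \<subseteq> H"
  proof -
    fix C assume "C \<in> clusters H"
    then obtain e where "C = component H e" unfolding clusters_def by blast
    then show "C \<subseteq> H" using comp_sub by simp
  qed
  have fcl: "finite (clusters H)"
  proof (rule finite_subset[where B="Pow H"])
    show "clusters H \<subseteq> Pow H" using clH by blast
    show "finite (Pow H)" using fin by simp
  qed
  have c4: "int (card (clusters H)) \<le> M4 r n"
  proof (rule ccontr)
    assume "\<not> int (card (clusters H)) \<le> M4 r n"
    then have "nat (M4 r n) + 1 \<le> card (clusters H)" using M4 by linarith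
    then obtain A where A: "A \<subseteq> clusters H" "card A = nat (M4 r n) + 1" by (meson obtain_subset_with_card_n)
    have A1: "A \<subseteq> LP r n"
    proof
      fix C assume CA: "C \<in> A"
      then have "C \<in> clusters H" using A(1) by (rule subsetD[rotated])
      then obtain e g where eg: "C = {e, g}" "linked e g" "e \<in> H" "g \<in> H" by (meson cl)
      have "{e, g} \<in> LP r n" by (rule linked_LP[OF subsetD[OF HE eg(3)] subsetD[OF HE eg(4)] eg(2)])
      then show "C \<in> LP r n" using eg(1) by simp
    qed
    have A2: "pairwise disjnt A"
      unfolding pairwise_def disjnt_def
    proof (intro ballI impI)
      fix C1 C2 assume "C1 \<in> A" "C2 \<in> A" "C1 \<noteq> C2"
      then show "C1 \<inter> C2 = {}" using cdisj[OF subsetD[OF A(1)] subsetD[OF A(1)]] by simp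
    qed
    have A3: "\<Union>A \<subseteq> H"
    proof
      fix x assume "x \<in> \<Union>A"
      then obtain C where "C \<in> A" "x \<in> C" by (rule UnionE)
      then show "x \<in> H" using clH[OF subsetD[OF A(1)]] by blast
    qed
    have "H \<in> bad_d r n m (nat (M4 r n) + 1)" unfolding bad_d_def mem_Collect_eq
      using H A1 A(2) A2 A3 by (intro conjI exI[of _ A])
    then show False using nd by contradiction
  qed
  have c5: "\<forall>v\<in>{1..n}. int (degree H v) \<le> M0 r n"
  proof (rule ballI, rule ccontr)
    fix v assume v: "v \<in> {1..n}" "\<not> int (degree H v) \<le> M0 r n"
    then have dv: "nat (M0 r n) + 1 \<le> degree H v" using M0 by linarith
    have "H \<in> bad_e r n m (nat (M0 r n) + 1)" unfolding bad_e_def mem_Collect_eq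
      using H v(1) dv by (intro conjI bexI[of _ v])
    then show False using ne5 by contradiction
  qed
  have "H \<in> hypergraphs_plus r n m" unfolding hypergraphs_plus_def mem_Collect_eq
    using H c1 c2 c3 c4 c5 by (intro conjI)
  then show False using nplus by blast
qed

lemma struct_pplus:
  assumes H: "H \<in> hypergraphs r n m" and np: "H \<notin> hypergraphs_pplus r n m" and M0: "0 \<le> M0star r n"
  shows "H \<in> (hypergraphs r n m - hypergraphs_plus r n m) \<union> bad_e r n m (nat (M0star r n) + 1)"
proof (cases "H \<in> hypergraphs_plus r n m")
  case True
  then obtain v where v: "v \<in> {1..n}" "\<not> int (degree H v) \<le> M0star r n"
    using np unfolding hypergraphs_pplus_def by blast
  then have "nat (M0star r n) + 1 \<le> degree H v" using M0 by linarith
  then have "H \<in> bad_e r n m (nat (M0star r n) + 1)" unfolding bad_e_def mem_Collect_eq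
    using H v(1) by (intro conjI bexI[of _ v])
  then show ?thesis by blast
next
  case False
  then show ?thesis using H by blast
qed



lemma rho_d:
  fixes u K t :: real and k :: nat
  assumes u: "0 \<le> u" "u \<le> K" and K: "1 \<le> K" and t: "0 < t" and k: "1 \<le> k"
    and lk: "ln t \<le> real k" and f: "(K^2 * exp 2) ^ k \<le> fact k"
  shows "(u^2) ^ k / fact k \<le> u^2 / t"
proof -
  have tk: "t \<le> exp (real k)" using lk t by (metis exp_le_cancel_iff exp_ln)
  have "exp (real k) \<le> exp 2 ^ k"
    by (simp add: exp_of_nat_mult[symmetric]) 
  have "(u^2) ^ k = u^2 * (u^2) ^ (k - 1)" using k by (metis power_eq_if not_one_le_zero)
  have uK: "(u^2) ^ (k - 1) \<le> (K^2) ^ k"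
  proof -
    have "(u^2) ^ (k - 1) \<le> (K^2) ^ (k - 1)" using u by (intro power_mono) (simp_all add: power_mono)
    also have "\<dots> \<le> (K^2) ^ k" using K by (intro power_increasing) (simp_all add: one_le_power)
    finally show ?thesis .
  qed
  have "(u^2) ^ (k - 1) * t \<le> (K^2) ^ k * exp 2 ^ k"
  proof (rule mult_mono[OF uK])
    show "t \<le> exp 2 ^ k"
    proof -
      have "exp (real k) \<le> exp (2 * real k)" by simp
      also have "\<dots> = exp 2 ^ k" by (simp add: exp_of_nat_mult[symmetric] mult.commute)
      finally show ?thesis using tk by linarith
    qed
  qed (use K t in auto)
  also have "\<dots> = (K^2 * exp 2) ^ k" by (simp add: power_mult_distrib)
  also have "\<dots> \<le> fact k" by (rule f)
  finally have key: "(u^2) ^ (k - 1) * t \<le> fact k" .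
  have "(u^2) ^ k / fact k = u^2 * ((u^2) ^ (k - 1) / fact k)"
    using \<open>(u^2) ^ k = u^2 * (u^2) ^ (k - 1)\<close> by simp
  also have "\<dots> \<le> u^2 * (1 / t)"
  proof (rule mult_left_mono)
    show "(u^2) ^ (k - 1) / fact k \<le> 1 / t" using key t by (simp add: field_simps)
  qed simp
  finally show ?thesis by simp
qed

lemma rho_e:
  fixes u K t R :: real and k :: nat
  assumes u: "0 \<le> u" "u \<le> K" and K: "1 \<le> K" and t: "0 < t" and k: "2 \<le> k" and R: "1 \<le> R"
    and lk: "ln t \<le> real k" and f: "(K^2 * exp 2) ^ k \<le> fact k"
  shows "t * R^2 * (u / R) ^ k / fact k \<le> u^2 / t"
proof -
  have tk: "t \<le> exp (real k)" using lk t by (metis exp_le_cancel_iff exp_ln)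
  have t2: "t^2 \<le> exp 2 ^ k"
  proof -
    have "t^2 \<le> exp (real k) ^ 2" using tk t by (intro power_mono) simp_all
    also have "\<dots> = exp 2 ^ k" by (simp add: exp_of_nat_mult[symmetric] exp_of_nat2_mult[symmetric] mult.commute)
    finally show ?thesis .
  qed
  have uk: "u ^ k = u^2 * u ^ (k - 2)" using k by (metis le_add_diff_inverse power_add)
  have Rk: "R ^ k = R^2 * R ^ (k - 2)" using k by (metis le_add_diff_inverse power_add)
  have Rk1: "1 \<le> R ^ (k - 2)" using R by (simp add: one_le_power)
  have uK: "u ^ (k - 2) \<le> (K^2) ^ k"
  proof -
    have "u ^ (k - 2) \<le> K ^ (k - 2)" using u by (intro power_mono) simp_all
    also have "\<dots> \<le> K ^ (2 * k)" using K by (intro power_increasing) simp_all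
    finally show ?thesis by (simp add: power_mult)
  qed
  have key: "t^2 * u ^ (k - 2) \<le> fact k"
  proof -
    have "t^2 * u ^ (k - 2) \<le> exp 2 ^ k * (K^2) ^ k"
      using t2 uK u by (intro mult_mono) simp_all
    also have "\<dots> = (K^2 * exp 2) ^ k" by (simp add: power_mult_distrib mult.commute)
    finally show ?thesis using f by linarith
  qed
  have "t * R^2 * (u / R) ^ k / fact k = t * u^2 * (u ^ (k - 2) / R ^ (k - 2)) / fact k"
    using R by (simp add: power_divide uk Rk field_simps)
  also have "\<dots> \<le> t * u^2 * u ^ (k - 2) / fact k"
  proof -
    have "u ^ (k - 2) / R ^ (k - 2) \<le> u ^ (k - 2) / 1"
      by (rule divide_left_mono) (use Rk1 u in auto)
    then have "u ^ (k - 2) / R ^ (k - 2) \<le> u ^ (k - 2)" by simp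
    then show ?thesis using t u by (intro divide_right_mono mult_left_mono) simp_all
  qed
  also have "\<dots> \<le> u^2 / t"
  proof -
    have "u^2 * (t^2 * u ^ (k - 2)) \<le> u^2 * fact k" by (rule mult_left_mono[OF key]) simp
    then show ?thesis using t by (simp add: field_simps power2_eq_square)
  qed
  finally show ?thesis .
qed

lemma card_hyp_pos:
  assumes r3: "3 \<le> r" and rn: "r \<le> n" and mt: "real m \<le> (real n / real r ^ 2) ^ 2"
  shows "0 < card (hypergraphs r n m)"
proof -
  have r0: "real r > 0" using r3 by simp
  have n0: "real n > 0" using r3 rn by simp
  have q1: "1 \<le> real n / real r" using rn r0 by simp
  have "(real n / real r ^ 2) ^ 2 \<le> (real n / real r) ^ 3"
  proof -
    have a: "1 \<le> n" "1 \<le> r" using r3 rn by linarith+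
    have "1 * 1 \<le> n * r" by (rule mult_le_mono[OF a])
    then have "1 \<le> real (n * r)" by linarith
    then have "1 \<le> real n * real r" by simp
    then show ?thesis using r0 n0 by (simp add: power_divide field_simps eval_nat_numeral mult_le_cancel_left1 mult_left_mono)
  qed
  also have "\<dots> \<le> (real n / real r) ^ r" using q1 r3 by (intro power_increasing) simp_all
  also have "\<dots> \<le> real (n choose r)" using rn by (rule binomial_ge_n_over_k_pow_k)
  finally have "m \<le> n choose r" using mt by simp
  then show ?thesis by (simp add: card_hyp)
qed

lemma pointwise:
  fixes r n m :: nat and K :: real
  assumes r3: "3 \<le> r" and rn: "r \<le> n" and K: "1 \<le> K"
    and mK: "real m \<le> K * (real n / real r ^ 2)"
    and tK: "K \<le> real n / real r ^ 2"
    and L1: "1 \<le> ln (real n / real r ^ 2)"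
    and fk: "\<forall>k::nat. ln (real n / real r ^ 2) \<le> real k \<longrightarrow> (K^2 * exp 2) ^ k \<le> fact k"
  shows "\<bar>1 - real (card (hypergraphs_plus r n m)) / real (card (hypergraphs r n m))\<bar>
           \<le> (4 + K + 2 * K^2) * (real r ^ 6 * real m ^ 2 / real n ^ 3)"
    and "\<bar>1 - real (card (hypergraphs_pplus r n m)) / real (card (hypergraphs r n m))\<bar>
           \<le> (5 + K + 2 * K^2) * (real r ^ 6 * real m ^ 2 / real n ^ 3)"
proof -
  define t where "t = real n / real r ^ 2"
  define L where "L = ln t"
  define u where "u = real m / t"
  define err where "err = real r ^ 6 * real m ^ 2 / real n ^ 3"
  define Hy where "Hy = real (card (hypergraphs r n m))"
  have r0: "real r \<ge> 1" using r3 by simp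
  have n0: "real n > 0" using r3 rn by simp
  have t0: "t > 0" unfolding t_def using n0 r0 by simp
  have Nn: "real n = t * real r ^ 2" unfolding t_def using r0 by simp
  have Mu: "real m = u * t" unfolding u_def using t0 by simp
  have u0: "0 \<le> u" unfolding u_def using t0 by simp
  have mKt: "real m \<le> K * t" using mK unfolding t_def .
  have uK: "u \<le> K" unfolding u_def using mKt t0 by (simp add: divide_le_eq)
  have errU: "err = u^2 / t" unfolding err_def using t0 r0 by (simp add: Nn Mu field_simps eval_nat_numeral)
  have err0: "0 \<le> err" unfolding err_def by simp
  have L1': "1 \<le> L" using L1 unfolding L_def t_def .
  have fk': "\<And>k::nat. L \<le> real k \<Longrightarrow> (K^2 * exp 2) ^ k \<le> fact k" using fk unfolding L_def t_def by blast
  have lnt: "ln t = L" unfolding L_def ..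
  have Hpos: "0 < card (hypergraphs r n m)"
  proof (rule card_hyp_pos[OF r3 rn])
    have "real m \<le> K * t" using mK unfolding t_def .
    also have "\<dots> \<le> t * t" using tK t0 unfolding t_def[symmetric] by (intro mult_right_mono) simp_all
    finally show "real m \<le> (real n / real r ^ 2) ^ 2" unfolding t_def by (simp add: power2_eq_square)
  qed
  have Hy0: "Hy > 0" unfolding Hy_def using Hpos by simp
  have M4v: "M4 r n = \<lceil>L\<rceil>" unfolding M4_def L_def t_def by simp
  have M0v: "M0 r n = \<lceil>L\<rceil> + 2" unfolding M0_def M0star_def L_def t_def by simp
  have M0sv: "M0star r n = \<lceil>L\<rceil>" unfolding M0star_def L_def t_def by simp
  have cL: "1 \<le> \<lceil>L\<rceil>" using L1' by linarith
  define k4 where "k4 = nat (M4 r n) + 1"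
  define k0 where "k0 = nat (M0 r n) + 1"
  define ks where "ks = nat (M0star r n) + 1"
  have k4: "1 \<le> k4" "L \<le> real k4" unfolding k4_def M4v using cL by (simp_all, linarith)
  have k0: "2 \<le> k0" "L \<le> real k0" unfolding k0_def M0v using cL by (simp_all, linarith+)
  have ks: "2 \<le> ks" "L \<le> real ks" unfolding ks_def M0sv using cL by (simp_all, linarith+)
  have rpos: "0 < r" "r \<le> n" using r3 rn by simp_all
  have ra: "real r ^ 6 * real m ^ 2 / real n ^ 3 = err" unfolding err_def ..
  have rb: "real r ^ 8 * real m ^ 3 / real n ^ 4 \<le> K * err"
  proof -
    have "real r ^ 8 * real m ^ 3 / real n ^ 4 = u * err" unfolding errU using t0 r0
      by (simp add: Nn Mu field_simps eval_nat_numeral)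
    also have "\<dots> \<le> K * err" using uK err0 by (rule mult_right_mono)
    finally show ?thesis .
  qed
  have rc: "2 * real r ^ 10 * real m ^ 4 / real n ^ 5 \<le> 2 * K^2 * err"
  proof -
    have "2 * real r ^ 10 * real m ^ 4 / real n ^ 5 = 2 * u^2 * err" unfolding errU using t0 r0
      by (simp add: Nn Mu field_simps eval_nat_numeral)
    also have "\<dots> \<le> 2 * K^2 * err" using uK u0 err0 by (intro mult_right_mono mult_left_mono power_mono) simp_all
    finally show ?thesis .
  qed
  have rd: "(real r ^ 4 * real m ^ 2 / real n ^ 2) ^ k4 / fact k4 \<le> err"
  proof -
    have "real r ^ 4 * real m ^ 2 / real n ^ 2 = u^2" using t0 r0
      by (simp add: Nn Mu field_simps eval_nat_numeral)
    then show ?thesis unfolding errU using rho_d[OF u0 uK K t0 k4(1) _ fk'[OF k4(2)]] k4(2) lnt by simp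
  qed
  have re: "\<And>k. 2 \<le> k \<Longrightarrow> L \<le> real k \<Longrightarrow> real n * (real r * real m / real n) ^ k / fact k \<le> err"
  proof -
    fix k :: nat assume k: "2 \<le> k" "L \<le> real k"
    have "real r * real m / real n = u / real r" using t0 r0 by (simp add: Nn Mu field_simps eval_nat_numeral)
    then have "real n * (real r * real m / real n) ^ k / fact k = t * real r ^ 2 * (u / real r) ^ k / fact k"
      by (simp add: Nn)
    also have "\<dots> \<le> u^2 / t" by (rule rho_e[OF u0 uK K t0 k(1) r0]) (use k(2) lnt fk'[OF k(2)] in simp_all)
    finally show "real n * (real r * real m / real n) ^ k / fact k \<le> err" unfolding errU .
  qed
  let ?Hy = "hypergraphs r n m"
  let ?U = "bad_a r n m \<union> bad_b r n m \<union> bad_c r n m \<union> bad_d r n m k4 \<union> bad_e r n m k0"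
  have M4p: "0 \<le> M4 r n" using M4v cL by simp
  have M0p: "0 \<le> M0 r n" using M0v cL by simp
  have M0sp: "0 \<le> M0star r n" using M0sv cL by simp
  have sub: "?Hy - hypergraphs_plus r n m \<subseteq> ?U"
    using struct_plus[OF _ _ M4p M0p] unfolding k4_def k0_def by blast
  have fU: "finite (bad_a r n m)" "finite (bad_b r n m)" "finite (bad_c r n m)" "finite (bad_d r n m k4)" "finite (bad_e r n m k0)"
    unfolding bad_a_def bad_b_def bad_c_def bad_d_def bad_e_def by simp_all
  have "card (?Hy - hypergraphs_plus r n m) \<le> card ?U" by (rule card_mono) (use fU sub in simp_all)
  also have "\<dots> \<le> card (bad_a r n m) + card (bad_b r n m) + card (bad_c r n m) + card (bad_d r n m k4) + card (bad_e r n m k0)"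
    by (meson card_Un_le add_le_mono order_trans le_refl)
  finally have cD: "real (card (?Hy - hypergraphs_plus r n m)) \<le> real (card (bad_a r n m)) + real (card (bad_b r n m)) + real (card (bad_c r n m)) + real (card (bad_d r n m k4)) + real (card (bad_e r n m k0))"
    by linarith
  have b1: "real (card (bad_a r n m)) \<le> Hy * err" using bound_a[OF rpos, of m] ra unfolding Hy_def by simp
  have b2: "real (card (bad_b r n m)) \<le> Hy * (K * err)"
    using bound_b[OF rpos, of m] rb Hy0 unfolding Hy_def by (meson mult_left_mono less_imp_le order_trans)
  have b3: "real (card (bad_c r n m)) \<le> Hy * (2 * K^2 * err)"
    using bound_c[OF rpos, of m] rc Hy0 unfolding Hy_def by (meson mult_left_mono less_imp_le order_trans)
  have b4: "real (card (bad_d r n m k4)) \<le> Hy * err"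
    using bound_d[OF rpos, of m k4] rd Hy0 unfolding Hy_def by (meson mult_left_mono less_imp_le order_trans)
  have b5: "real (card (bad_e r n m k0)) \<le> Hy * err"
    using bound_e[OF rpos, of m k0] re[OF k0] Hy0 unfolding Hy_def by (meson mult_left_mono less_imp_le order_trans)
  have b6: "real (card (bad_e r n m ks)) \<le> Hy * err"
    using bound_e[OF rpos, of m ks] re[OF ks] Hy0 unfolding Hy_def by (meson mult_left_mono less_imp_le order_trans)
  have D1: "real (card (?Hy - hypergraphs_plus r n m)) \<le> Hy * ((4 + K + 2 * K^2) * err)"
    using cD b1 b2 b3 b4 b5 by (simp add: algebra_simps)
  have psub: "hypergraphs_plus r n m \<subseteq> ?Hy" unfolding hypergraphs_plus_def by blast
  have ppsub: "hypergraphs_pplus r n m \<subseteq> ?Hy" unfolding hypergraphs_pplus_def hypergraphs_plus_def by blast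
  have eq1: "1 - real (card (hypergraphs_plus r n m)) / Hy = real (card (?Hy - hypergraphs_plus r n m)) / Hy"
  proof -
    have "card (?Hy - hypergraphs_plus r n m) = card ?Hy - card (hypergraphs_plus r n m)"
      by (rule card_Diff_subset[OF finite_subset[OF psub finite_hyp] psub])
    moreover have "card (hypergraphs_plus r n m) \<le> card ?Hy" by (rule card_mono[OF finite_hyp psub])
    ultimately have "real (card (?Hy - hypergraphs_plus r n m)) = Hy - real (card (hypergraphs_plus r n m))"
      unfolding Hy_def by (simp add: of_nat_diff)
    then show ?thesis using Hy0 by (simp add: diff_divide_distrib)
  qed
  have eq2: "1 - real (card (hypergraphs_pplus r n m)) / Hy = real (card (?Hy - hypergraphs_pplus r n m)) / Hy"
  proof -
    have "card (?Hy - hypergraphs_pplus r n m) = card ?Hy - card (hypergraphs_pplus r n m)"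
      by (rule card_Diff_subset[OF finite_subset[OF ppsub finite_hyp] ppsub])
    moreover have "card (hypergraphs_pplus r n m) \<le> card ?Hy" by (rule card_mono[OF finite_hyp ppsub])
    ultimately have "real (card (?Hy - hypergraphs_pplus r n m)) = Hy - real (card (hypergraphs_pplus r n m))"
      unfolding Hy_def by (simp add: of_nat_diff)
    then show ?thesis using Hy0 by (simp add: diff_divide_distrib)
  qed
  have sub2: "?Hy - hypergraphs_pplus r n m \<subseteq> (?Hy - hypergraphs_plus r n m) \<union> bad_e r n m ks"
    using struct_pplus[OF _ _ M0sp] unfolding ks_def by blast
  have "card (?Hy - hypergraphs_pplus r n m) \<le> card ((?Hy - hypergraphs_plus r n m) \<union> bad_e r n m ks)"
    by (rule card_mono) (use sub2 in \<open>simp_all add: bad_e_def\<close>)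
  also have "\<dots> \<le> card (?Hy - hypergraphs_plus r n m) + card (bad_e r n m ks)" by (rule card_Un_le)
  finally have D2: "real (card (?Hy - hypergraphs_pplus r n m)) \<le> Hy * ((5 + K + 2 * K^2) * err)"
    using D1 b6 by (simp add: algebra_simps)
  show "\<bar>1 - real (card (hypergraphs_plus r n m)) / real (card (hypergraphs r n m))\<bar>
           \<le> (4 + K + 2 * K^2) * (real r ^ 6 * real m ^ 2 / real n ^ 3)"
    unfolding Hy_def[symmetric] err_def[symmetric] eq1 using D1 Hy0 by (simp add: divide_le_eq mult.commute)
  show "\<bar>1 - real (card (hypergraphs_pplus r n m)) / real (card (hypergraphs r n m))\<bar>
           \<le> (5 + K + 2 * K^2) * (real r ^ 6 * real m ^ 2 / real n ^ 3)"
    unfolding Hy_def[symmetric] err_def[symmetric] eq2 using D2 Hy0 by (simp add: divide_le_eq mult.commute)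
qed

lemma pow_le_fact_ev: "\<exists>k0. \<forall>k\<ge>k0. (c::real) ^ k \<le> fact k"
proof -
  have "(\<lambda>k. inverse (fact k) * c ^ k) \<longlonglongrightarrow> 0" by (rule summable_LIMSEQ_zero[OF summable_exp])
  then have "eventually (\<lambda>k. norm (inverse (fact k) * c ^ k) < 1) sequentially"
    by (rule order_tendstoD(2)[OF tendsto_norm_zero]) simp
  then obtain k0 where k0: "\<And>k. k \<ge> k0 \<Longrightarrow> norm (inverse (fact k) * c ^ k) < 1"
    unfolding eventually_sequentially by blast
  have "\<forall>k\<ge>k0. c ^ k \<le> fact k"
  proof (intro allI impI)
    fix k assume "k \<ge> k0"
    then have "\<bar>c ^ k\<bar> / fact k < 1" using k0 by (simp add: abs_mult divide_inverse mult.commute)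
    then have "\<bar>c ^ k\<bar> \<le> fact k" by (simp add: divide_less_eq)
    then show "c ^ k \<le> fact k" by linarith
  qed
  then show ?thesis by blast
qed

theorem main_result:
  fixes r m :: "nat \<Rightarrow> nat"
  assumes "\<forall>n. r n \<ge> 3"
    and "(\<lambda>n. real (r n)) \<in> o(\<lambda>n. sqrt (real n))"
    and "\<forall>\<^sub>F n in at_top. ln (real n / (real (r n))\<^sup>2) \<le> real (m n)"
    and "(\<lambda>n. real (m n)) \<in> O(\<lambda>n. real n / (real (r n))\<^sup>2)"
  shows "(\<lambda>n. 1 - real (card (hypergraphs_plus (r n) n (m n))) / real (card (hypergraphs (r n) n (m n))))
           \<in> O(\<lambda>n. (real (r n))^6 * (real (m n))\<^sup>2 / (real n)^3) \<and>
         (\<lambda>n. 1 - real (card (hypergraphs_pplus (r n) n (m n))) / real (card (hypergraphs (r n) n (m n))))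
           \<in> O(\<lambda>n. (real (r n))^6 * (real (m n))\<^sup>2 / (real n)^3)"
proof -
  obtain c where c: "c > 0" "eventually (\<lambda>n. norm (real (m n)) \<le> c * norm (real n / (real (r n))\<^sup>2)) at_top"
    using assms(4) by (rule landau_o.bigE)
  define K where "K = max 1 c"
  have K1: "1 \<le> K" unfolding K_def by simp
  obtain k0 where k0: "\<forall>k\<ge>k0. (K^2 * exp 2) ^ k \<le> fact k" using pow_le_fact_ev by blast
  define B where "B = max K (max (exp 1) (exp (real k0)))"
  have B1: "1 \<le> B" unfolding B_def using K1 by simp
  have Bpos: "0 < B" using B1 by simp
  have ev2: "eventually (\<lambda>n. norm (real (r n)) \<le> (1 / sqrt B) * norm (sqrt (real n))) at_top"
    using assms(2) by (rule landau_o.smallD) (use Bpos in simp)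
  have ev: "eventually (\<lambda>n.
      \<bar>1 - real (card (hypergraphs_plus (r n) n (m n))) / real (card (hypergraphs (r n) n (m n)))\<bar>
           \<le> (4 + K + 2 * K^2) * (real (r n) ^ 6 * real (m n) ^ 2 / real n ^ 3) \<and>
      \<bar>1 - real (card (hypergraphs_pplus (r n) n (m n))) / real (card (hypergraphs (r n) n (m n)))\<bar>
           \<le> (5 + K + 2 * K^2) * (real (r n) ^ 6 * real (m n) ^ 2 / real n ^ 3)) at_top"
    using c(2) ev2
  proof eventually_elim
    case (elim n)
    define t where "t = real n / real (r n) ^ 2"
    have r3: "3 \<le> r n" using assms(1) by simp
    have rpos: "real (r n) > 0" using r3 by simp
    have "real (r n) \<le> sqrt (real n) / sqrt B" using elim(2) by simp
    then have "real (r n) ^ 2 \<le> (sqrt (real n) / sqrt B) ^ 2" using rpos by (intro power_mono) simp_all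
    also have "\<dots> = real n / B" using Bpos by (simp add: power_divide)
    finally have r2: "real (r n) ^ 2 \<le> real n / B" .
    have tB: "B \<le> t" unfolding t_def using r2 rpos Bpos by (simp add: field_simps)
    have tpos: "0 < t" using tB Bpos by simp
    have rn: "r n \<le> n"
    proof -
      have "real (r n) \<le> real (r n) ^ 2" using rpos r3 by (simp add: power2_eq_square)
      also have "\<dots> \<le> real n / B" by (rule r2)
      also have "\<dots> \<le> real n" using B1 by (simp add: divide_le_eq mult_le_cancel_left1)
      finally show ?thesis by simp
    qed
    have tK: "K \<le> t" using tB unfolding B_def by simp
    have te: "exp 1 \<le> t" using tB unfolding B_def by simp
    have L1: "1 \<le> ln t" using te tpos by (metis exp_le_cancel_iff exp_ln)
    have tk0: "exp (real k0) \<le> t" using tB unfolding B_def by simp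
    have Lk0: "real k0 \<le> ln t" using tk0 tpos by (metis exp_le_cancel_iff exp_ln)
    have mK: "real (m n) \<le> K * t"
    proof -
      have "real (m n) \<le> c * t" using elim(1) tpos unfolding t_def by simp
      also have "\<dots> \<le> K * t" unfolding K_def using tpos by (intro mult_right_mono) simp_all
      finally show ?thesis .
    qed
    have fk: "\<forall>k::nat. ln t \<le> real k \<longrightarrow> (K^2 * exp 2) ^ k \<le> fact k"
    proof (intro allI impI)
      fix k :: nat assume "ln t \<le> real k"
      then have "k0 \<le> k" using Lk0 by linarith
      then show "(K^2 * exp 2) ^ k \<le> fact k" using k0 by blast
    qed
    show ?case
      using pointwise[OF r3 rn K1 mK[unfolded t_def] tK[unfolded t_def] L1[unfolded t_def] fk[unfolded t_def]]
      by blast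
  qed
  have e0: "\<And>n. 0 \<le> real (r n) ^ 6 * real (m n) ^ 2 / real n ^ 3" by simp
  show ?thesis
  proof
    show "(\<lambda>n. 1 - real (card (hypergraphs_plus (r n) n (m n))) / real (card (hypergraphs (r n) n (m n))))
           \<in> O(\<lambda>n. (real (r n))^6 * (real (m n))\<^sup>2 / (real n)^3)"
    proof (rule landau_o.bigI[of "4 + K + 2 * K^2"])
      show "0 < 4 + K + 2 * K^2" using K1 by (simp add: add_pos_nonneg)
      show "eventually (\<lambda>n. norm (1 - real (card (hypergraphs_plus (r n) n (m n))) / real (card (hypergraphs (r n) n (m n))))
         \<le> (4 + K + 2 * K^2) * norm ((real (r n))^6 * (real (m n))\<^sup>2 / (real n)^3)) at_top"
        using ev by eventually_elim (simp only: real_norm_def abs_of_nonneg[OF e0])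
    qed
    show "(\<lambda>n. 1 - real (card (hypergraphs_pplus (r n) n (m n))) / real (card (hypergraphs (r n) n (m n))))
           \<in> O(\<lambda>n. (real (r n))^6 * (real (m n))\<^sup>2 / (real n)^3)"
    proof (rule landau_o.bigI[of "5 + K + 2 * K^2"])
      show "0 < 5 + K + 2 * K^2" using K1 by (simp add: add_pos_nonneg)
      show "eventually (\<lambda>n. norm (1 - real (card (hypergraphs_pplus (r n) n (m n))) / real (card (hypergraphs (r n) n (m n))))
         \<le> (5 + K + 2 * K^2) * norm ((real (r n))^6 * (real (m n))\<^sup>2 / (real n)^3)) at_top"
        using ev by eventually_elim (simp only: real_norm_def abs_of_nonneg[OF e0])
    qed
  qed
qed


theorem theorem7p2:
  fixes r m :: "nat \<Rightarrow> nat"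
  assumes "\<forall>n. r n \<ge> 3"
    and "(\<lambda>n. real (r n)) \<in> o(\<lambda>n. sqrt (real n))"
    and "\<forall>\<^sub>F n in at_top. ln (real n / (real (r n))\<^sup>2) \<le> real (m n)"
    and "(\<lambda>n. real (m n)) \<in> O(\<lambda>n. real n / (real (r n))\<^sup>2)"
  shows "(\<lambda>n. 1 - real (card (hypergraphs_plus (r n) n (m n))) / real (card (hypergraphs (r n) n (m n))))
           \<in> O(\<lambda>n. (real (r n))^6 * (real (m n))\<^sup>2 / (real n)^3) \<and>
         (\<lambda>n. 1 - real (card (hypergraphs_pplus (r n) n (m n))) / real (card (hypergraphs (r n) n (m n))))
           \<in> O(\<lambda>n. (real (r n))^6 * (real (m n))\<^sup>2 / (real n)^3)"
    using assms by (rule main_result)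

end
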